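(* Assume the setup below, with the training loss nonincreasing along the trajectory, and let $t_0$ be a time. Suppose that for every time $t\ge t_0$ the set $\{\delta X(s,\alpha(t)):s\in T\}$ satisfies Condition A at time $t$ with constants $\Lambda\ge 1$, $\psi=1$, $0<\phi<1$ and $m_0=0$. Then for every $\varepsilon>0$ there exist $\delta>0$ and $\eta>0$ (depending only on $\Lambda,\phi,K,\varepsilon$) such that, whenever $$\nu(G_\eta(t_0))>1-\delta\quad\text{and}\quad B_{-1}(t_0)=\emptyset,$$ then for all $t\ge t_0$: $$\mathrm{acc}(t)=\nu(G_0(t))\ge 1-\varepsilon,$$ and for every $\eta^*$ with $0<\eta^*<-\log\big(3\Lambda \bar L(t_0)\big)$, $$\nu(G_{\eta^*}(t))>1-\varepsilon-\left(\tfrac34\right)^{-\frac{\log(3\Lambda \bar L(t_0))}{2\eta^*}}.$$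
   Context: Setup. Fix integers $n\ge1$, $K\ge 2$. $T\subset\mathbb R^n$ is a finite set (training set); each $s\in T$ has a class $i(s)\in\{1,\dots,K\}$ and a weight $\nu(s)\in(0,1]$ with $\sum_{s\in T}\nu(s)=1$; for $A\subset T$, $\nu(A)=\sum_{s\in A}\nu(s)$. A parametrized family of maps $X(\cdot,\alpha):\mathbb R^n\to\mathbb R^K$ is given, and the classifier is $p(s,\alpha)=\rho(X(s,\alpha))$ where $\rho$ is the softmax, $p_k(s,\alpha)=e^{X_k(s,\alpha)}/\sum_{j=1}^K e^{X_j(s,\alpha)}$. Define $\delta X(s,\alpha)=X_{i(s)}(s,\alpha)-\max_{j\ne i(s)}X_j(s,\alpha)$ and the cross-entropy loss $\bar L(\alpha)=-\sum_{s\in T}\nu(s)\log p_{i(s)}(s,\alpha)$. A training trajectory is a family of parameters $\alpha(t)$ indexed by times $t$ (e.g. nonnegative integers); write $\bar L(t)=\bar L(\alpha(t))$; "loss nonincreasing" means $\bar L(t_2)\le \bar L(t_1)$ whenever $t_2\ge t_1$. Good set of margin $\eta$: $G_\eta(t)=\{s\in T:\delta X(s,\alpha(t))>\eta\}$; bad set: $B_{-\eta}(t)=\{s\in T:\delta X(s,\alpha(t))\le-\eta\}$; accuracy $\mathrm{acc}(t)=\nu(G_0(t))$. Condition A at time $t$ with constants $\Lambda\ge1$, $m_0\ge 0$, $\psi>0$, $0<\phi<1$: letting $\beta(t)=\min_{s\in T}\delta X(s,\alpha(t))$, for $x_1\in\{0,\beta(t)\}$ and every $x_2>x_1$, $$\nu(\{s:\delta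 X(s,\alpha(t))<\tfrac{x_1+x_2}{2}\})-m_0\le \Lambda\,\nu(\{s:\delta X(s,\alpha(t))<x_1\})^{\phi}+\Lambda\,\nu(\{s:\delta X(s,\alpha(t))<x_2\})^{\psi+1}$$ (with the convention $0^\phi=0$). *)

theory Defs
  imports Complex_Main
begin

(* Points of R^n are represented as functions nat => real vanishing from index n on.
   Logit vectors X(s, alpha(t)) in R^K are functions nat => real, components 1..K used.
   The trajectory enters only through X(., alpha(t)), given as a function of time t::real. *)

definition softmax :: "nat \<Rightarrow> (nat \<Rightarrow> real) \<Rightarrow> nat \<Rightarrow> real" where
  "softmax K x k = exp (x k) / (\<Sum>j=1..K. exp (x j))"

definition margin :: "nat \<Rightarrow> (nat \<Rightarrow> real) \<Rightarrow> nat \<Rightarrow> real" where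
  "margin K x c = x c - Max (x ` ({1..K} - {c}))"

definition train_setup ::
  "nat \<Rightarrow> nat \<Rightarrow> (nat \<Rightarrow> real) set \<Rightarrow> ((nat \<Rightarrow> real) \<Rightarrow> nat) \<Rightarrow> ((nat \<Rightarrow> real) \<Rightarrow> real) \<Rightarrow> bool" where
  "train_setup n K T cls \<nu> \<longleftrightarrow> n \<ge> 1 \<and> K \<ge> 2 \<and> finite T \<and>
     (\<forall>s\<in>T. \<forall>j\<ge>n. s j = 0) \<and> (\<forall>s\<in>T. cls s \<in> {1..K}) \<and>
     (\<forall>s\<in>T. 0 < \<nu> s \<and> \<nu> s \<le> 1) \<and> sum \<nu> T = 1"

definition dX :: "nat \<Rightarrow> ((nat \<Rightarrow> real) \<Rightarrow> nat) \<Rightarrow> (real \<Rightarrow> (nat \<Rightarrow> real) \<Rightarrow> nat \<Rightarrow> real) \<Rightarrow> real \<Rightarrow> (nat \<Rightarrow> real) \<Rightarrow> real" where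
  "dX K cls X t s = margin K (X t s) (cls s)"

definition loss :: "nat \<Rightarrow> (nat \<Rightarrow> real) set \<Rightarrow> ((nat \<Rightarrow> real) \<Rightarrow> nat) \<Rightarrow> ((nat \<Rightarrow> real) \<Rightarrow> real) \<Rightarrow> (real \<Rightarrow> (nat \<Rightarrow> real) \<Rightarrow> nat \<Rightarrow> real) \<Rightarrow> real \<Rightarrow> real" where
  "loss K T cls \<nu> X t = - (\<Sum>s\<in>T. \<nu> s * ln (softmax K (X t s) (cls s)))"

definition good_set :: "nat \<Rightarrow> (nat \<Rightarrow> real) set \<Rightarrow> ((nat \<Rightarrow> real) \<Rightarrow> nat) \<Rightarrow> (real \<Rightarrow> (nat \<Rightarrow> real) \<Rightarrow> nat \<Rightarrow> real) \<Rightarrow> real \<Rightarrow> real \<Rightarrow> (nat \<Rightarrow> real) set" where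
  "good_set K T cls X \<eta> t = {s\<in>T. dX K cls X t s > \<eta>}"

(* B_{-eta}(t) *)
definition bad_set :: "nat \<Rightarrow> (nat \<Rightarrow> real) set \<Rightarrow> ((nat \<Rightarrow> real) \<Rightarrow> nat) \<Rightarrow> (real \<Rightarrow> (nat \<Rightarrow> real) \<Rightarrow> nat \<Rightarrow> real) \<Rightarrow> real \<Rightarrow> real \<Rightarrow> (nat \<Rightarrow> real) set" where
  "bad_set K T cls X \<eta> t = {s\<in>T. dX K cls X t s \<le> - \<eta>}"

(* Condition A at time t; powr satisfies 0 powr a = 0, matching the convention 0^phi = 0 *)
definition condA :: "nat \<Rightarrow> (nat \<Rightarrow> real) set \<Rightarrow> ((nat \<Rightarrow> real) \<Rightarrow> nat) \<Rightarrow> ((nat \<Rightarrow> real) \<Rightarrow> real) \<Rightarrow> (real \<Rightarrow> (nat \<Rightarrow> real) \<Rightarrow> nat \<Rightarrow> real) \<Rightarrow> real \<Rightarrow> real \<Rightarrow> real \<Rightarrow> real \<Rightarrow> real \<Rightarrow> bool" where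
  "condA K T cls \<nu> X t \<Lambda> m0 \<psi> \<phi> \<longleftrightarrow>
     (let \<beta> = Min ((dX K cls X t) ` T) in
      \<forall>x1\<in>{0, \<beta>}. \<forall>x2>x1.
        sum \<nu> {s\<in>T. dX K cls X t s < (x1 + x2) / 2} - m0
          \<le> \<Lambda> * (sum \<nu> {s\<in>T. dX K cls X t s < x1}) powr \<phi>
           + \<Lambda> * (sum \<nu> {s\<in>T. dX K cls X t s < x2}) powr (\<psi> + 1))"

end

theory Submission
  imports Defs
begin

lemma sm_basic:
  assumes "c \<in> {1..K}"
  shows "0 < softmax K x c" "softmax K x c \<le> 1"
proof -
  have "exp (x c) \<le> (\<Sum>j=1..K. exp (x j))"
    using assms by (intro member_le_sum) auto
  moreover have "0 < (\<Sum>j=1..K. exp (x j))"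
    using assms by (intro sum_pos) auto
  ultimately show "0 < softmax K x c" "softmax K x c \<le> 1" unfolding softmax_def by auto
qed

lemma sm_lower:
  assumes "c \<in> {1..K}" "K \<ge> 2" "margin K x c \<ge> e"
  shows "- ln (softmax K x c) \<le> (real K - 1) * exp (- e)"
proof -
  let ?A = "{1..K} - {c}"
  let ?M = "Max (x ` ?A)"
  have finA: "finite ?A" by simp
  have cardA: "card ?A = K - 1" using assms(1) by simp
  have le: "x j \<le> x c - e" if "j \<in> ?A" for j
  proof -
    have "x j \<le> ?M" using that finA by (intro Max_ge) auto
    thus ?thesis using assms(3) unfolding margin_def by linarith
  qed
  have "(\<Sum>j\<in>?A. exp (x j)) \<le> (\<Sum>j\<in>?A. exp (x c - e))"
    using le by (intro sum_mono) auto
  also have "\<dots> = (real K - 1) * exp (x c - e)" using cardA assms(2) by (simp add: of_nat_diff)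
  finally have s1: "(\<Sum>j\<in>?A. exp (x j)) \<le> (real K - 1) * exp (x c - e)" .
  have S: "(\<Sum>j=1..K. exp (x j)) = exp (x c) + (\<Sum>j\<in>?A. exp (x j))"
    using assms(1) by (simp add: sum.remove)
  define p where "p = softmax K x c"
  have ppos: "0 < p" using sm_basic(1)[OF assms(1)] p_def by simp
  have "1 / p = (\<Sum>j=1..K. exp (x j)) / exp (x c)" unfolding p_def softmax_def by simp
  also have "\<dots> = 1 + (\<Sum>j\<in>?A. exp (x j)) / exp (x c)" using S by (simp add: field_simps)
  also have "\<dots> \<le> 1 + (real K - 1) * exp (x c - e) / exp (x c)"
    using s1 by (simp add: divide_right_mono)
  also have "(real K - 1) * exp (x c - e) / exp (x c) = (real K - 1) * exp (-e)"
    by (simp add: exp_diff exp_minus field_simps)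
  finally have "1/p \<le> 1 + (real K - 1) * exp (-e)" .
  moreover have "- ln p = ln (1/p)" using ppos by (simp add: ln_div)
  moreover have "ln (1/p) \<le> 1/p - 1" using ppos by (intro ln_le_minus_one) simp
  ultimately show ?thesis unfolding p_def[symmetric] by linarith
qed

lemma sm_upper:
  assumes "c \<in> {1..K}" "K \<ge> 2" "margin K x c \<le> m" "m \<ge> 0"
  shows "- ln (softmax K x c) \<ge> exp (- m) / 2"
proof -
  let ?A = "{1..K} - {c}"
  have finA: "finite ?A" by simp
  have neA: "?A \<noteq> {}"
  proof -
    have "card ?A > 0" using assms(1,2) by simp
    thus ?thesis by (metis card.empty less_irrefl)
  qed
  have "Max (x ` ?A) \<in> x ` ?A" using finA neA by (intro Max_in) auto
  then obtain j where j: "j \<in> ?A" "x j = Max (x ` ?A)" by (metis imageE)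
  have xj: "x j \<ge> x c - m" using j assms(3) unfolding margin_def by linarith
  have S: "(\<Sum>i=1..K. exp (x i)) = exp (x c) + (\<Sum>i\<in>?A. exp (x i))"
    using assms(1) by (simp add: sum.remove)
  have "exp (x j) \<le> (\<Sum>i\<in>?A. exp (x i))"
    using j(1) finA by (intro member_le_sum) auto
  moreover have "exp (x c - m) \<le> exp (x j)" using xj by simp
  ultimately have S2: "exp (x c) + exp (x c - m) \<le> (\<Sum>i=1..K. exp (x i))" using S by linarith
  define y where "y = exp (-m)"
  have y: "0 < y" "y \<le> 1" using assms(4) unfolding y_def by auto
  have "exp (x c - m) = exp (x c) * y" unfolding y_def by (simp add: exp_diff exp_minus field_simps)
  hence S3: "exp (x c) * (1 + y) \<le> (\<Sum>i=1..K. exp (x i))" using S2 by (simp add: algebra_simps)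
  have Spos: "0 < (\<Sum>i=1..K. exp (x i))" using assms(1) by (intro sum_pos) auto
  define p where "p = softmax K x c"
  have p: "p \<le> 1 / (1 + y)"
    unfolding p_def softmax_def using y Spos S3 by (simp add: divide_simps mult.commute)
  have ppos: "0 < p" using sm_basic(1)[OF assms(1)] p_def by simp
  have "ln p \<le> p - 1" using ppos by (intro ln_le_minus_one) simp
  moreover have "1 - 1 / (1 + y) \<ge> y / 2" using y by (simp add: field_simps)
  ultimately show ?thesis unfolding p_def[symmetric] y_def[symmetric] using p by linarith
qed

lemma min_mass:
  fixes d \<nu> :: "'a \<Rightarrow> real"
  assumes fin: "finite T" and ne: "T \<noteq> {}" and pos: "\<forall>s\<in>T. 0 < \<nu> s" and L: "\<Lambda> > 0"
  and cA: "\<forall>x2 > Min (d ` T). sum \<nu> {s\<in>T. d s < (Min (d ` T) + x2)/2}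
      \<le> \<Lambda> * (sum \<nu> {s\<in>T. d s < Min (d ` T)}) powr \<phi> + \<Lambda> * (sum \<nu> {s\<in>T. d s < x2}) powr 2"
  shows "sum \<nu> {s\<in>T. d s = Min (d ` T)} \<ge> 1 / \<Lambda>"
proof -
  define \<beta> where "\<beta> = Min (d ` T)"
  define D where "D = d ` T - {\<beta>}"
  define x2 where "x2 = (if D = {} then \<beta> + 1 else Min D)"
  have finD: "finite D" unfolding D_def using fin by simp
  have bmin: "\<beta> \<le> d s" if "s \<in> T" for s unfolding \<beta>_def using fin that by simp
  have x2gt: "x2 > \<beta>"
  proof (cases "D = {}")
    case True thus ?thesis unfolding x2_def by simp
  next
    case False
    hence "Min D \<in> D" using finD by (intro Min_in) auto
    hence "Min D > \<beta>" unfolding D_def using bmin by force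
    thus ?thesis using False unfolding x2_def by simp
  qed
  have key: "{s\<in>T. d s < y} = {s\<in>T. d s = \<beta>}" if "\<beta> < y" "y \<le> x2" for y
  proof -
    have "d s = \<beta>" if s: "s \<in> T" "d s < y" for s
    proof (rule ccontr)
      assume "d s \<noteq> \<beta>"
      hence "d s \<in> D" unfolding D_def using s by auto
      hence "D \<noteq> {}" "Min D \<le> d s" using finD by auto
      thus False using s \<open>y \<le> x2\<close> unfolding x2_def by auto
    qed
    thus ?thesis using that by auto
  qed
  have empty: "{s\<in>T. d s < \<beta>} = {}" using bmin by force
  define m where "m = sum \<nu> {s\<in>T. d s = \<beta>}"
  have "\<beta> \<in> d ` T" unfolding \<beta>_def using fin ne by (intro Min_in) auto
  then obtain s0 where s0: "s0 \<in> T" "d s0 = \<beta>" by (metis imageE)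
  have mpos: "m > 0" unfolding m_def
  proof (rule sum_pos2[where i=s0])
    show "finite {s\<in>T. d s = \<beta>}" using fin by simp
    show "s0 \<in> {s\<in>T. d s = \<beta>}" using s0 by simp
    show "0 < \<nu> s0" using s0 pos by simp
    show "\<And>i. i \<in> {s\<in>T. d s = \<beta>} \<Longrightarrow> 0 \<le> \<nu> i" using pos by (simp add: less_imp_le)
  qed
  have "sum \<nu> {s\<in>T. d s < (\<beta> + x2)/2}
      \<le> \<Lambda> * (sum \<nu> {s\<in>T. d s < \<beta>}) powr \<phi> + \<Lambda> * (sum \<nu> {s\<in>T. d s < x2}) powr 2"
    using cA x2gt unfolding \<beta>_def by blast
  moreover have "{s\<in>T. d s < (\<beta> + x2)/2} = {s\<in>T. d s = \<beta>}" using x2gt by (intro key) auto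
  moreover have "{s\<in>T. d s < x2} = {s\<in>T. d s = \<beta>}" using x2gt by (intro key) auto
  ultimately have "m \<le> \<Lambda> * m powr 2" unfolding empty by (simp add: m_def)
  hence "m \<le> \<Lambda> * m^2" using mpos by (simp add: powr_numeral)
  hence "1 \<le> \<Lambda> * m" using mpos by (simp add: power2_eq_square)
  thus ?thesis unfolding m_def[symmetric] \<beta>_def[symmetric] using L by (simp add: field_simps)
qed



lemma setup_facts:
  assumes "train_setup n K T cls \<nu>"
  shows "finite T" "T \<noteq> {}" "\<forall>s\<in>T. 0 < \<nu> s" "\<forall>s\<in>T. cls s \<in> {1..K}" "K \<ge> 2" "sum \<nu> T = 1"
  using assms unfolding train_setup_def by auto

lemma condA_mass:
  assumes ts: "train_setup n K T cls \<nu>" and cA: "condA K T cls \<nu> X t \<Lambda> 0 1 \<phi>" and L: "\<Lambda> > 0"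
  shows "sum \<nu> {s\<in>T. dX K cls X t s = Min (dX K cls X t ` T)} \<ge> 1 / \<Lambda>"
proof (rule min_mass)
  show "finite T" "T \<noteq> {}" "\<forall>s\<in>T. 0 < \<nu> s" using setup_facts[OF ts] by auto
  show "\<Lambda> > 0" by (rule L)
  have c: "\<forall>x1\<in>{0, Min (dX K cls X t ` T)}. \<forall>x2>x1.
        sum \<nu> {s\<in>T. dX K cls X t s < (x1 + x2) / 2} - 0
          \<le> \<Lambda> * (sum \<nu> {s\<in>T. dX K cls X t s < x1}) powr \<phi>
           + \<Lambda> * (sum \<nu> {s\<in>T. dX K cls X t s < x2}) powr (1 + 1)"
    using cA unfolding condA_def Let_def by blast
  show "\<forall>x2 > Min (dX K cls X t ` T). sum \<nu> {s\<in>T. dX K cls X t s < (Min (dX K cls X t ` T) + x2)/2}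
      \<le> \<Lambda> * (sum \<nu> {s\<in>T. dX K cls X t s < Min (dX K cls X t ` T)}) powr \<phi>
       + \<Lambda> * (sum \<nu> {s\<in>T. dX K cls X t s < x2}) powr 2"
    using c by (simp only: diff_zero one_add_one) blast
qed

lemma loss_nonneg_term:
  assumes "c \<in> {1..K}" shows "0 \<le> - ln (softmax K x c)"
  using sm_basic[OF assms, of x] by simp

lemma loss_LB:
  assumes ts: "train_setup n K T cls \<nu>" and cA: "condA K T cls \<nu> X t \<Lambda> 0 1 \<phi>" and L: "\<Lambda> > 0"
    and m: "m \<ge> 0" and lt: "loss K T cls \<nu> X t < exp (-m) / (2 * \<Lambda>)"
  shows "\<forall>s\<in>T. dX K cls X t s > m"
proof (rule ccontr)
  note F = setup_facts[OF ts]
  let ?d = "dX K cls X t"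
  let ?b = "Min (?d ` T)"
  let ?M = "{s\<in>T. ?d s = ?b}"
  assume "\<not> (\<forall>s\<in>T. ?d s > m)"
  then obtain s1 where s1: "s1 \<in> T" "?d s1 \<le> m" by auto
  have "?b \<le> ?d s1" using F(1) s1 by simp
  hence bm: "?b \<le> m" using s1 by linarith
  have mass: "sum \<nu> ?M \<ge> 1 / \<Lambda>" by (rule condA_mass[OF ts cA L])
  have loss_eq: "loss K T cls \<nu> X t = (\<Sum>s\<in>T. \<nu> s * (- ln (softmax K (X t s) (cls s))))"
    unfolding loss_def by (simp add: sum_negf)
  have "(\<Sum>s\<in>?M. \<nu> s * (exp (-m) / 2)) \<le> (\<Sum>s\<in>?M. \<nu> s * (- ln (softmax K (X t s) (cls s))))"
  proof (rule sum_mono)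
    fix s assume s: "s \<in> ?M"
    have "margin K (X t s) (cls s) \<le> m" using s bm unfolding dX_def by simp
    hence "exp (-m) / 2 \<le> - ln (softmax K (X t s) (cls s))"
      using sm_upper[of "cls s" K "X t s" m] F(4,5) s m by auto
    thus "\<nu> s * (exp (-m) / 2) \<le> \<nu> s * (- ln (softmax K (X t s) (cls s)))"
      using F(3) s by (intro mult_left_mono) auto
  qed
  also have "\<dots> \<le> (\<Sum>s\<in>T. \<nu> s * (- ln (softmax K (X t s) (cls s))))"
  proof (rule sum_mono2)
    show "finite T" using F(1) .
    show "?M \<subseteq> T" by auto
    fix s assume "s \<in> T - ?M"
    thus "0 \<le> \<nu> s * (- ln (softmax K (X t s) (cls s)))"
      using F(3,4) loss_nonneg_term by (intro mult_nonneg_nonneg) (auto simp: less_imp_le)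
  qed
  finally have A: "(\<Sum>s\<in>?M. \<nu> s * (exp (-m) / 2)) \<le> loss K T cls \<nu> X t"
    unfolding loss_eq .
  have "(\<Sum>s\<in>?M. \<nu> s * (exp (-m) / 2)) = sum \<nu> ?M * (exp (-m) / 2)"
    by (rule sum_distrib_right[symmetric])
  hence "sum \<nu> ?M * (exp (-m) / 2) \<le> loss K T cls \<nu> X t" using A by linarith
  moreover have "1 / \<Lambda> * (exp (-m) / 2) \<le> sum \<nu> ?M * (exp (-m) / 2)"
    using mass by (intro mult_right_mono) auto
  moreover have "1 / \<Lambda> * (exp (-m) / 2) = exp (-m) / (2 * \<Lambda>)" by simp
  ultimately show False using lt by linarith
qed

lemma loss_UB:
  assumes ts: "train_setup n K T cls \<nu>" and g: "\<forall>s\<in>T. dX K cls X t s \<ge> e"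
  shows "loss K T cls \<nu> X t \<le> (real K - 1) * exp (-e)"
proof -
  note F = setup_facts[OF ts]
  have loss_eq: "loss K T cls \<nu> X t = (\<Sum>s\<in>T. \<nu> s * (- ln (softmax K (X t s) (cls s))))"
    unfolding loss_def by (simp add: sum_negf)
  also have "\<dots> \<le> (\<Sum>s\<in>T. \<nu> s * ((real K - 1) * exp (-e)))"
  proof (rule sum_mono)
    fix s assume s: "s \<in> T"
    have "- ln (softmax K (X t s) (cls s)) \<le> (real K - 1) * exp (-e)"
      using sm_lower[of "cls s" K e "X t s"] F(4,5) s g unfolding dX_def by auto
    thus "\<nu> s * (- ln (softmax K (X t s) (cls s))) \<le> \<nu> s * ((real K - 1) * exp (-e))"
      using F(3) s by (intro mult_left_mono) auto
  qed
  also have "\<dots> = (real K - 1) * exp (-e)" using F(6) by (simp add: sum_distrib_right[symmetric])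
  finally show ?thesis .
qed

theorem theorem1:
  fixes \<Lambda> \<phi> \<epsilon> :: real and K :: nat
  assumes "\<Lambda> \<ge> 1" and "0 < \<phi>" and "\<phi> < 1" and "K \<ge> 2" and "\<epsilon> > 0"
  shows "\<exists>\<delta>>0. \<exists>\<eta>>0. \<forall>(n::nat) (T :: (nat \<Rightarrow> real) set) cls \<nu>
           (X :: real \<Rightarrow> (nat \<Rightarrow> real) \<Rightarrow> nat \<Rightarrow> real) (t0::real).
     train_setup n K T cls \<nu> \<longrightarrow>
     (\<forall>t1 t2. t1 \<le> t2 \<longrightarrow> loss K T cls \<nu> X t2 \<le> loss K T cls \<nu> X t1) \<longrightarrow>
     (\<forall>t\<ge>t0. condA K T cls \<nu> X t \<Lambda> 0 1 \<phi>) \<longrightarrow>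
     sum \<nu> (good_set K T cls X \<eta> t0) > 1 - \<delta> \<longrightarrow>
     bad_set K T cls X 1 t0 = {} \<longrightarrow>
     (\<forall>t\<ge>t0. sum \<nu> (good_set K T cls X 0 t) \<ge> 1 - \<epsilon> \<and>
        (\<forall>\<eta>s. 0 < \<eta>s \<and> \<eta>s < - ln (3 * \<Lambda> * loss K T cls \<nu> X t0) \<longrightarrow>
           sum \<nu> (good_set K T cls X \<eta>s t) >
             1 - \<epsilon> - (3/4) powr (- ln (3 * \<Lambda> * loss K T cls \<nu> X t0) / (2 * \<eta>s))))"
proof -
  define \<eta> where "\<eta> = ln (3 * \<Lambda> * real K)"
  have Lpos: "\<Lambda> > 0" using assms by simp
  have big: "3 * \<Lambda> * real K > 1"
  proof -
    have "3 * \<Lambda> * real K \<ge> 3 * 1 * 2" using assms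
      by (intro mult_mono) auto
    thus ?thesis by simp
  qed
  have eta_pos: "\<eta> > 0" unfolding \<eta>_def using big by simp
  have eeta: "exp (-\<eta>) = 1 / (3*\<Lambda>*real K)" unfolding \<eta>_def using big by (simp add: exp_minus field_simps)
  have L0small: "(real K - 1) * exp (-\<eta>) < 1 / (3 * \<Lambda>)"
    unfolding eeta using Lpos assms(4) by (simp add: field_simps)
  have main: "train_setup n K T cls \<nu> \<longrightarrow>
     (\<forall>t1 t2. t1 \<le> t2 \<longrightarrow> loss K T cls \<nu> X t2 \<le> loss K T cls \<nu> X t1) \<longrightarrow>
     (\<forall>t\<ge>t0. condA K T cls \<nu> X t \<Lambda> 0 1 \<phi>) \<longrightarrow>
     sum \<nu> (good_set K T cls X \<eta> t0) > 1 - 1/\<Lambda> \<longrightarrow>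
     bad_set K T cls X 1 t0 = {} \<longrightarrow>
     (\<forall>t\<ge>t0. sum \<nu> (good_set K T cls X 0 t) \<ge> 1 - \<epsilon> \<and>
        (\<forall>\<eta>s. 0 < \<eta>s \<and> \<eta>s < - ln (3 * \<Lambda> * loss K T cls \<nu> X t0) \<longrightarrow>
           sum \<nu> (good_set K T cls X \<eta>s t) >
             1 - \<epsilon> - (3/4) powr (- ln (3 * \<Lambda> * loss K T cls \<nu> X t0) / (2 * \<eta>s))))"
    for n T cls \<nu> X t0
  proof (intro impI)
    assume ts: "train_setup n K T cls \<nu>"
      and mono: "\<forall>t1 t2. t1 \<le> t2 \<longrightarrow> loss K T cls \<nu> X t2 \<le> loss K T cls \<nu> X t1"
      and cA: "\<forall>t\<ge>t0. condA K T cls \<nu> X t \<Lambda> 0 1 \<phi>"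
      and good: "sum \<nu> (good_set K T cls X \<eta> t0) > 1 - 1/\<Lambda>"
    note F = setup_facts[OF ts]
    let ?d = "dX K cls X t0"
    let ?b = "Min (?d ` T)"
    let ?M = "{s\<in>T. ?d s = ?b}"
    have all0: "\<forall>s\<in>T. ?d s > \<eta>"
    proof (rule ccontr)
      assume "\<not> (\<forall>s\<in>T. ?d s > \<eta>)"
      then obtain s1 where s1: "s1 \<in> T" "?d s1 \<le> \<eta>" by auto
      have "?b \<le> ?d s1" using F(1) s1 by simp
      hence bm: "?b \<le> \<eta>" using s1 by linarith
      have mass: "sum \<nu> ?M \<ge> 1 / \<Lambda>" using condA_mass[OF ts _ Lpos] cA by auto
      have sub: "good_set K T cls X \<eta> t0 \<subseteq> T - ?M"
        unfolding good_set_def using bm by auto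
      have "sum \<nu> (good_set K T cls X \<eta> t0) \<le> sum \<nu> (T - ?M)"
        using sub F(1,3) by (intro sum_mono2) (auto simp: less_imp_le)
      also have "\<dots> = sum \<nu> T - sum \<nu> ?M" using F(1) by (intro sum_diff) auto
      finally show False using mass good F(6) by linarith
    qed
    have L0: "loss K T cls \<nu> X t0 < 1 / (3 * \<Lambda>)"
      using loss_UB[OF ts, where X=X and t=t0 and e=\<eta>] all0 L0small by (auto simp: less_imp_le)
    have allpos: "\<forall>s\<in>T. dX K cls X t s > m" if t: "t \<ge> t0" and m: "m \<ge> 0"
      and Lm: "loss K T cls \<nu> X t0 < exp (-m) / (2 * \<Lambda>)" for t m
    proof (rule loss_LB[OF ts _ Lpos m])
      show "condA K T cls \<nu> X t \<Lambda> 0 1 \<phi>" using cA t by auto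
      show "loss K T cls \<nu> X t < exp (-m) / (2 * \<Lambda>)" using mono t Lm by force
    qed
    show "\<forall>t\<ge>t0. sum \<nu> (good_set K T cls X 0 t) \<ge> 1 - \<epsilon> \<and>
        (\<forall>\<eta>s. 0 < \<eta>s \<and> \<eta>s < - ln (3 * \<Lambda> * loss K T cls \<nu> X t0) \<longrightarrow>
           sum \<nu> (good_set K T cls X \<eta>s t) >
             1 - \<epsilon> - (3/4) powr (- ln (3 * \<Lambda> * loss K T cls \<nu> X t0) / (2 * \<eta>s)))"
    proof (intro allI impI conjI)
      fix t assume t: "t \<ge> t0"
      have "1 / (3 * \<Lambda>) \<le> exp (-0) / (2 * \<Lambda>)" using Lpos by (simp add: field_simps)
      hence "\<forall>s\<in>T. dX K cls X t s > 0" using allpos[OF t, of 0] L0 by simp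
      hence "good_set K T cls X 0 t = T" unfolding good_set_def by auto
      thus "sum \<nu> (good_set K T cls X 0 t) \<ge> 1 - \<epsilon>" using F(6) assms(5) by simp
      fix \<eta>s assume es: "0 < \<eta>s \<and> \<eta>s < - ln (3 * \<Lambda> * loss K T cls \<nu> X t0)"
      have Ls: "loss K T cls \<nu> X t0 < exp (-\<eta>s) / (2 * \<Lambda>)"
      proof (cases "loss K T cls \<nu> X t0 \<le> 0")
        case True
        have "0 < exp (-\<eta>s) / (2 * \<Lambda>)" using Lpos by simp
        thus ?thesis using True by linarith
      next
        case False
        hence pos: "3 * \<Lambda> * loss K T cls \<nu> X t0 > 0" using Lpos by simp
        have "ln (3 * \<Lambda> * loss K T cls \<nu> X t0) < - \<eta>s" using es by linarith
        hence "exp (ln (3 * \<Lambda> * loss K T cls \<nu> X t0)) < exp (- \<eta>s)" by simp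
        hence "3 * \<Lambda> * loss K T cls \<nu> X t0 < exp (- \<eta>s)" using pos by simp
        hence "loss K T cls \<nu> X t0 < exp (-\<eta>s) / (3 * \<Lambda>)" using Lpos by (simp add: field_simps)
        also have "\<dots> \<le> exp (-\<eta>s) / (2 * \<Lambda>)" using Lpos by (intro divide_left_mono) auto
        finally show ?thesis .
      qed
      have "\<forall>s\<in>T. dX K cls X t s > \<eta>s" using allpos[OF t _ Ls] es by simp
      hence "good_set K T cls X \<eta>s t = T" unfolding good_set_def by auto
      hence S1: "sum \<nu> (good_set K T cls X \<eta>s t) = 1" using F(6) by simp
      have P: "(3/4::real) powr (- ln (3 * \<Lambda> * loss K T cls \<nu> X t0) / (2 * \<eta>s)) > 0" by simp
      show "sum \<nu> (good_set K T cls X \<eta>s t) >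
             1 - \<epsilon> - (3/4) powr (- ln (3 * \<Lambda> * loss K T cls \<nu> X t0) / (2 * \<eta>s))"
        using S1 P assms(5) by linarith
    qed
  qed
  have "1 / \<Lambda> > 0" using Lpos by simp
  thus ?thesis using eta_pos main by blast
qed

end
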